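(* Let $A$ be the filtered boundary matrix of a Morse decomposition with respect to an admissible enumeration $\sigma_1,\dots,\sigma_n$ (see context), and let $A_{out}$ be the matrix obtained after the column-reduction phase of ConMat. Then $A_{out}$ satisfies: (R1) the map $J_h(A_{out})\ni j\mapsto\mathrm{low}_{A_{out}}(j)\in J_t(A_{out})$ is a well-defined bijection; (R2) $J_h(A_{out})\cap J_t(A_{out})=\emptyset$; (R3) if $A_{out}[i,j]=1$ for some $i\le\mathrm{low}_{A_{out}}(j)$, then there is no $s\in J_h(A_{out})$ with $s<j$ and $\mathrm{low}_{A_{out}}(s)=i$.
   Context: $K$ is a finite simplicial complex ($\tau\le\sigma$: $\tau$ is a face of $\sigma$; $\mathrm{cl}(\sigma)=\{\tau:\tau\le\sigma\}$). A multivector field $\mathcal V$ on $K$ is a partition of $K$ into convex sets $V$ (if $\sigma,\tau\in V$ and $\sigma\le\mu\le\tau$ then $\mu\in V$); $[\sigma]_{\mathcal V}$ is the part containing $\sigma$, $F_{\mathcal V}(\sigma)=[\sigma]_{\mathcal V}\cup\mathrm{cl}(\sigma)$, and a path is a sequence $\sigma_1,\dots,\sigma_r$ with $\sigma_k\in F_{\mathcal V}(\sigma_{k-1})$. A Morse decomposition indexed by a finite poset $(P,\le_P)$ is a partition $K=\bigsqcup_{p\in P}M_p$ such that every path from $M_p$ to $M_q$ has $q\le_P p$; $[\sigma]_P$ is the $p$ with $\sigma\in M_p$. An admissible enumeration is $\sigma_1,\dots,\sigma_n$ of all simplices of $K$ such that (a) for some linear extension $\le_{lin}$ of $\le_P$,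 $i\le j\Rightarrow[\sigma_i]_P\le_{lin}[\sigma_j]_P$; (b) if $\sigma_i$ is a proper face of $\sigma_j$ then $i<j$. The filtered boundary matrix $A$ is the $n\times n$ $\mathbb Z_2$-matrix with $A[i,j]=1$ iff $\sigma_i$ is a codimension-one face of $\sigma_j$; row/column $i$ represents $\sigma_i$. For a nonzero column $j$ of such a matrix $B$, $\mathrm{low}_B(j)$ is the largest $i$ with $B[i,j]=1$. Column (and row) $j$ is homogeneous if nonzero and $\sigma_j$, $\sigma_{\mathrm{low}_B(j)}$ are in the same Morse set; then index $\mathrm{low}_B(j)$ is targetable. $J_h(B)$, $J_t(B)$: sets of homogeneous, targetable indices. ConMat reduction phase on $A$ (in place): for $j=1,\dots,n$: for $i=\mathrm{low}_A(j)$ down to $1$: if $A[i,j]=1$ and some column $s<j$ of the current matrix is homogeneous with $\mathrm{low}_A(s)=i$, add column $s$ to column $j$ (mod 2). $A_{out}$ is the matrix after the outer loop. *)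

theory Defs
  imports Main "HOL-Library.Disjoint_Sets"
begin

definition simplicial_complex :: "'v set set \<Rightarrow> bool" where
  "simplicial_complex K \<longleftrightarrow> finite K \<and>
     (\<forall>\<sigma>\<in>K. finite \<sigma> \<and> \<sigma> \<noteq> {}) \<and>
     (\<forall>\<sigma>\<in>K. \<forall>\<tau>. \<tau> \<subseteq> \<sigma> \<and> \<tau> \<noteq> {} \<longrightarrow> \<tau> \<in> K)"

definition closure_cl :: "'v set set \<Rightarrow> 'v set \<Rightarrow> 'v set set" where
  "closure_cl K \<sigma> = {\<tau>\<in>K. \<tau> \<subseteq> \<sigma>}"

definition multivector_field :: "'v set set \<Rightarrow> 'v set set set \<Rightarrow> bool" where
  "multivector_field K V \<longleftrightarrow> partition_on K V \<and>
     (\<forall>B\<in>V. \<forall>\<sigma> \<tau> \<mu>. \<sigma> \<in> B \<and> \<tau> \<in> B \<and> \<mu> \<in> K \<and> \<sigma> \<subseteq> \<mu> \<and> \<mu> \<subseteq> \<tau> \<longrightarrow> \<mu> \<in> B)"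

definition mvf_class :: "'v set set set \<Rightarrow> 'v set \<Rightarrow> 'v set set" where
  "mvf_class V \<sigma> = (THE B. B \<in> V \<and> \<sigma> \<in> B)"

definition F_mvf :: "'v set set \<Rightarrow> 'v set set set \<Rightarrow> 'v set \<Rightarrow> 'v set set" where
  "F_mvf K V \<sigma> = mvf_class V \<sigma> \<union> closure_cl K \<sigma>"

definition is_path :: "'v set set \<Rightarrow> 'v set set set \<Rightarrow> 'v set list \<Rightarrow> bool" where
  "is_path K V xs \<longleftrightarrow> xs \<noteq> [] \<and>
     (\<forall>k. Suc k < length xs \<longrightarrow> xs ! Suc k \<in> F_mvf K V (xs ! k))"

text \<open>A Morse decomposition indexed by a finite poset P (order inherited from the
  type class order), given by the map idx sending sigma to [sigma]_P, i.e.
  M_p = {sigma in K. idx sigma = p}.\<close>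
definition morse_decomposition ::
  "'v set set \<Rightarrow> 'v set set set \<Rightarrow> 'p::order set \<Rightarrow> ('v set \<Rightarrow> 'p) \<Rightarrow> bool" where
  "morse_decomposition K V P idx \<longleftrightarrow> finite P \<and> idx ` K \<subseteq> P \<and>
     (\<forall>xs. is_path K V xs \<and> hd xs \<in> K \<longrightarrow> idx (last xs) \<le> idx (hd xs))"

definition admissible_enumeration ::
  "'v set set \<Rightarrow> 'p::order set \<Rightarrow> ('v set \<Rightarrow> 'p) \<Rightarrow> (nat \<Rightarrow> 'v set) \<Rightarrow> bool" where
  "admissible_enumeration K P idx \<sigma> \<longleftrightarrow>
     bij_betw \<sigma> {1..card K} K \<and>
     (\<exists>r. linear_order_on P r \<and> {(p, q). p \<in> P \<and> q \<in> P \<and> p \<le> q} \<subseteq> r \<and>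
          (\<forall>i\<in>{1..card K}. \<forall>j\<in>{1..card K}. i \<le> j \<longrightarrow> (idx (\<sigma> i), idx (\<sigma> j)) \<in> r)) \<and>
     (\<forall>i\<in>{1..card K}. \<forall>j\<in>{1..card K}. \<sigma> i \<subset> \<sigma> j \<longrightarrow> i < j)"

type_synonym mat = "nat \<Rightarrow> nat \<Rightarrow> bool"  \<comment> \<open>entries over Z_2; indices 1..n\<close>

definition boundary_matrix :: "nat \<Rightarrow> (nat \<Rightarrow> 'v set) \<Rightarrow> mat" where
  "boundary_matrix n \<sigma> = (\<lambda>i j. i \<in> {1..n} \<and> j \<in> {1..n} \<and>
      \<sigma> i \<subseteq> \<sigma> j \<and> card (\<sigma> i) + 1 = card (\<sigma> j))"

definition nonzero_col :: "nat \<Rightarrow> mat \<Rightarrow> nat \<Rightarrow> bool" where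
  "nonzero_col n B j \<longleftrightarrow> (\<exists>i\<in>{1..n}. B i j)"

definition low :: "nat \<Rightarrow> mat \<Rightarrow> nat \<Rightarrow> nat" where
  "low n B j = Max {i\<in>{1..n}. B i j}"

text \<open>c i is the Morse index [sigma_i]_P of the i-th simplex.\<close>
definition homog :: "nat \<Rightarrow> (nat \<Rightarrow> 'p) \<Rightarrow> mat \<Rightarrow> nat \<Rightarrow> bool" where
  "homog n c B j \<longleftrightarrow> j \<in> {1..n} \<and> nonzero_col n B j \<and> c j = c (low n B j)"

definition Jh :: "nat \<Rightarrow> (nat \<Rightarrow> 'p) \<Rightarrow> mat \<Rightarrow> nat set" where
  "Jh n c B = {j. homog n c B j}"

definition Jt :: "nat \<Rightarrow> (nat \<Rightarrow> 'p) \<Rightarrow> mat \<Rightarrow> nat set" where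
  "Jt n c B = low n B ` Jh n c B"

definition add_col :: "mat \<Rightarrow> nat \<Rightarrow> nat \<Rightarrow> mat" where
  "add_col B s j = (\<lambda>i k. if k = j then (B i j \<noteq> B i s) else B i k)"

text \<open>Inner loop for column j, processing rows i, i-1, ..., 1. Relational, so that
  any choice of the column s is allowed.\<close>
inductive conmat_inner :: "nat \<Rightarrow> (nat \<Rightarrow> 'p) \<Rightarrow> nat \<Rightarrow> nat \<Rightarrow> mat \<Rightarrow> mat \<Rightarrow> bool"
  for n c j where
  base: "conmat_inner n c j 0 B B"
| add: "\<lbrakk> B (Suc i) j; s < j; homog n c B s; low n B s = Suc i;
          conmat_inner n c j i (add_col B s j) B' \<rbrakk> \<Longrightarrow> conmat_inner n c j (Suc i) B B'"
| skip: "\<lbrakk> \<not> (B (Suc i) j \<and> (\<exists>s<j. homog n c B s \<and> low n B s = Suc i));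
          conmat_inner n c j i B B' \<rbrakk> \<Longrightarrow> conmat_inner n c j (Suc i) B B'"

inductive conmat_outer :: "nat \<Rightarrow> (nat \<Rightarrow> 'p) \<Rightarrow> nat \<Rightarrow> mat \<Rightarrow> mat \<Rightarrow> bool"
  for n c where
  finish: "n < j \<Longrightarrow> conmat_outer n c j B B"
| step: "\<lbrakk> j \<le> n;
           conmat_inner n c j (if nonzero_col n B j then low n B j else 0) B B1;
           conmat_outer n c (Suc j) B1 B2 \<rbrakk> \<Longrightarrow> conmat_outer n c j B B2"

definition conmat_reduction :: "nat \<Rightarrow> (nat \<Rightarrow> 'p) \<Rightarrow> mat \<Rightarrow> mat \<Rightarrow> bool" where
  "conmat_reduction n c A Aout \<longleftrightarrow> conmat_outer n c 1 A Aout"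

end

theory Submission
  imports Defs "HOL-Library.Z2"
begin

declare add_bit_eq_xor[simp del] mult_bit_eq_and[simp del] sum_of_bool_eq[simp del]

abbreviation bv :: "mat \<Rightarrow> nat \<Rightarrow> nat \<Rightarrow> bit" where
  "bv B i k \<equiv> of_bool (B i k)"

lemma bit_cases2: "(x::bit) = 0 \<or> x = 1"
  using bit_not_zero_iff by blast

lemma bit_add_self [simp]: "(x::bit) + x = 0"
  using bit_cases2[of x] by auto

lemma of_bool_xor: "(of_bool (a \<noteq> b) :: bit) = of_bool a + of_bool b"
  by (cases a; cases b) (simp_all add: add_bit_eq_xor)

lemma bit_eq_of_sum0: "(x::bit) + y = 0 \<Longrightarrow> x = y"
  using bit_cases2[of x] bit_cases2[of y] by auto

lemma sum_symdiff:
  assumes "finite U" "finite W"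
  shows "(\<Sum>x\<in>(U-W)\<union>(W-U). f x :: bit) = sum f U + sum f W"
proof -
  have a: "sum f U = sum f (U-W) + sum f (U\<inter>W)"
    by (metis add.commute sum.Int_Diff assms(1))
  have b: "sum f W = sum f (W-U) + sum f (U\<inter>W)"
    by (metis add.commute sum.Int_Diff assms(2) Int_commute)
  have c: "(\<Sum>x\<in>(U-W)\<union>(W-U). f x) = sum f (U-W) + sum f (W-U)"
    by (rule sum.union_disjoint) (use assms in auto)
  have "sum f U + sum f W = sum f (U-W) + sum f (W-U) + (sum f (U\<inter>W) + sum f (U\<inter>W))"
    unfolding a b by (simp add: algebra_simps)
  then show ?thesis using c by simp
qed

definition Inv :: "nat \<Rightarrow> mat \<Rightarrow> mat \<Rightarrow> bool" where
 "Inv n A B \<longleftrightarrow>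
   (\<forall>i k. B i k \<longrightarrow> i \<in> {1..n} \<and> k \<in> {1..n} \<and> i < k) \<and>
   (\<forall>k\<in>{1..n}. \<exists>U. U \<subseteq> {1..k} \<and> k \<in> U \<and> (\<forall>i. bv B i k = (\<Sum>u\<in>U. bv A i u))) \<and>
   (\<forall>k\<in>{1..n}. \<exists>W. W \<subseteq> {1..k} \<and> k \<in> W \<and> (\<forall>i. bv A i k = (\<Sum>t\<in>W. bv B i t)))"

lemma sum_addcol:
  assumes "finite X"
  shows "(\<Sum>t\<in>X. bv (add_col B s j) i t) = (\<Sum>t\<in>X. bv B i t) + (if j \<in> X then bv B i s else 0)"
proof (cases "j \<in> X")
  case True
  have e: "(\<Sum>t\<in>X-{j}. bv (add_col B s j) i t) = (\<Sum>t\<in>X-{j}. bv B i t)"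
    by (rule sum.cong) (auto simp: add_col_def)
  have "(\<Sum>t\<in>X. bv (add_col B s j) i t) = bv (add_col B s j) i j + (\<Sum>t\<in>X-{j}. bv (add_col B s j) i t)"
    using sum.remove[OF assms True] by blast
  also have "\<dots> = (bv B i j + bv B i s) + (\<Sum>t\<in>X-{j}. bv B i t)"
    using e by (simp add: add_col_def of_bool_xor)
  also have "\<dots> = (bv B i j + (\<Sum>t\<in>X-{j}. bv B i t)) + bv B i s"
    by (simp add: algebra_simps)
  also have "bv B i j + (\<Sum>t\<in>X-{j}. bv B i t) = (\<Sum>t\<in>X. bv B i t)"
    using sum.remove[OF assms True] by metis
  finally show ?thesis using True by simp
next
  case False
  then show ?thesis by (auto intro!: sum.cong simp: add_col_def)
qed

lemma Inv_add:
  assumes I: "Inv n A B" and s: "s \<in> {1..n}" and j: "j \<in> {1..n}" and sj: "s < j"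
  shows "Inv n A (add_col B s j)"
proof -
  let ?B = "add_col B s j"
  have S: "\<forall>i k. B i k \<longrightarrow> i \<in> {1..n} \<and> k \<in> {1..n} \<and> i < k" using I by (simp add: Inv_def)
  have S': "\<forall>i k. ?B i k \<longrightarrow> i \<in> {1..n} \<and> k \<in> {1..n} \<and> i < k"
  proof -
    have "B i s \<Longrightarrow> i < j" for i using S sj by (meson less_trans)
    then show ?thesis using S j sj by (auto simp: add_col_def)
  qed
  have U': "\<exists>U. U \<subseteq> {1..k} \<and> k \<in> U \<and> (\<forall>i. bv ?B i k = (\<Sum>u\<in>U. bv A i u))"
    if k: "k \<in> {1..n}" for k
  proof (cases "k = j")
    case True
    obtain Uj where Uj: "Uj \<subseteq> {1..j}" "j \<in> Uj" "\<forall>i. bv B i j = (\<Sum>u\<in>Uj. bv A i u)"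
      using I j unfolding Inv_def by blast
    obtain Us where Us: "Us \<subseteq> {1..s}" "s \<in> Us" "\<forall>i. bv B i s = (\<Sum>u\<in>Us. bv A i u)"
      using I s unfolding Inv_def by blast
    have fin: "finite Uj" "finite Us" using Uj(1) Us(1) finite_subset by auto
    show ?thesis
    proof (intro exI conjI allI)
      show "(Uj - Us) \<union> (Us - Uj) \<subseteq> {1..k}" using Uj Us sj True by auto
      show "k \<in> (Uj - Us) \<union> (Us - Uj)" using Uj Us sj True by auto
      fix i
      have "bv ?B i k = bv B i j + bv B i s" using True by (simp add: add_col_def of_bool_xor)
      also have "\<dots> = (\<Sum>u\<in>(Uj - Us) \<union> (Us - Uj). bv A i u)"
        unfolding Uj(3)[rule_format] Us(3)[rule_format] by (rule sum_symdiff[OF fin, symmetric])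
      finally show "bv ?B i k = (\<Sum>u\<in>(Uj - Us) \<union> (Us - Uj). bv A i u)" .
    qed
  next
    case False
    obtain U where U: "U \<subseteq> {1..k}" "k \<in> U" "\<forall>i. bv B i k = (\<Sum>u\<in>U. bv A i u)"
      using I k unfolding Inv_def by blast
    have "\<forall>i. bv ?B i k = bv B i k" using False by (simp add: add_col_def)
    then show ?thesis using U by metis
  qed
  have W': "\<exists>W. W \<subseteq> {1..k} \<and> k \<in> W \<and> (\<forall>i. bv A i k = (\<Sum>t\<in>W. bv ?B i t))"
    if k: "k \<in> {1..n}" for k
  proof -
    obtain W where W: "W \<subseteq> {1..k}" "k \<in> W" "\<forall>i. bv A i k = (\<Sum>t\<in>W. bv B i t)"
      using I k unfolding Inv_def by blast
    have fW: "finite W" using W(1) finite_subset by auto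
    show ?thesis
    proof (cases "j \<in> W")
      case True
      have jk: "j \<le> k" using True W(1) by auto
      show ?thesis
      proof (intro exI conjI allI)
        show "(W - {s}) \<union> ({s} - W) \<subseteq> {1..k}" using W s sj jk by auto
        show "k \<in> (W - {s}) \<union> ({s} - W)" using W sj jk by auto
        fix i
        have jin: "j \<in> (W - {s}) \<union> ({s} - W)" using True sj by auto
        have fX: "finite ((W - {s}) \<union> ({s} - W))" using fW by simp
        have fs: "finite {s}" by simp
        have "(\<Sum>t\<in>(W - {s}) \<union> ({s} - W). bv ?B i t)
              = (\<Sum>t\<in>(W - {s}) \<union> ({s} - W). bv B i t) + (if j \<in> (W - {s}) \<union> ({s} - W) then bv B i s else 0)"
          by (rule sum_addcol[OF fX])
        also have "(if j \<in> (W - {s}) \<union> ({s} - W) then bv B i s else 0) = bv B i s"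
          using jin by (simp only: if_True)
        also have "(\<Sum>t\<in>(W - {s}) \<union> ({s} - W). bv B i t) = (\<Sum>t\<in>W. bv B i t) + (\<Sum>t\<in>{s}. bv B i t)"
          by (rule sum_symdiff[OF fW fs])
        also have "(\<Sum>t\<in>{s}. bv B i t) = bv B i s" by simp
        also have "(\<Sum>t\<in>W. bv B i t) + bv B i s + bv B i s = (\<Sum>t\<in>W. bv B i t)"
          by (simp only: add.assoc bit_add_self add_0_right)
        finally have c: "(\<Sum>t\<in>(W - {s}) \<union> ({s} - W). bv ?B i t) = (\<Sum>t\<in>W. bv B i t)" .
        show "bv A i k = (\<Sum>t\<in>(W - {s}) \<union> ({s} - W). bv ?B i t)"
          by (subst W(3)[rule_format]) (rule c[symmetric])
      qed
    next
      case False
      show ?thesis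
      proof (intro exI conjI allI)
        show "W \<subseteq> {1..k}" "k \<in> W" using W by auto
        fix i
        have "(\<Sum>t\<in>W. bv ?B i t) = (\<Sum>t\<in>W. bv B i t) + (if j \<in> W then bv B i s else 0)"
          by (rule sum_addcol[OF fW])
        also have "\<dots> = (\<Sum>t\<in>W. bv B i t)" using False by (simp only: if_False add_0_right)
        finally show "bv A i k = (\<Sum>t\<in>W. bv ?B i t)" using W(3) by (simp only:)
      qed
    qed
  qed
  show ?thesis unfolding Inv_def
  proof (intro conjI ballI)
    show "\<forall>i k. ?B i k \<longrightarrow> i \<in> {1..n} \<and> k \<in> {1..n} \<and> i < k" by (rule S')
  next
    fix k assume "k \<in> {1..n}"
    then show "\<exists>U. U \<subseteq> {1..k} \<and> k \<in> U \<and> (\<forall>i. bv ?B i k = (\<Sum>u\<in>U. bv A i u))" by (rule U')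
  next
    fix k assume "k \<in> {1..n}"
    then show "\<exists>W. W \<subseteq> {1..k} \<and> k \<in> W \<and> (\<forall>i. bv A i k = (\<Sum>t\<in>W. bv ?B i t))" by (rule W')
  qed
qed


lemma low_props:
  assumes "nonzero_col n B k"
  shows "low n B k \<in> {1..n}" "B (low n B k) k" "\<And>i. i \<in> {1..n} \<Longrightarrow> B i k \<Longrightarrow> i \<le> low n B k"
proof -
  have f: "finite {i\<in>{1..n}. B i k}" by simp
  have ne: "{i\<in>{1..n}. B i k} \<noteq> {}" using assms by (auto simp: nonzero_col_def)
  have "low n B k \<in> {i\<in>{1..n}. B i k}" unfolding low_def using Max_in[OF f ne] .
  then show "low n B k \<in> {1..n}" "B (low n B k) k" by auto
  show "\<And>i. i \<in> {1..n} \<Longrightarrow> B i k \<Longrightarrow> i \<le> low n B k"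
    unfolding low_def using Max_ge[OF f] by auto
qed

lemma col_cong:
  assumes "\<forall>x. B' x s = B x s"
  shows "low n B' s = low n B s" "nonzero_col n B' s = nonzero_col n B s"
    "homog n c B' s = homog n c B s"
  using assms by (simp_all add: low_def nonzero_col_def homog_def)

definition R3p :: "nat \<Rightarrow> (nat \<Rightarrow> 'p) \<Rightarrow> mat \<Rightarrow> nat \<Rightarrow> bool" where
  "R3p n c B k \<longleftrightarrow> (\<forall>m\<in>{1..n}. B m k \<longrightarrow> \<not> (\<exists>s<k. homog n c B s \<and> low n B s = m))"

lemma R3p_cong:
  assumes "\<forall>x k'. k' \<le> k \<longrightarrow> B' x k' = B x k'"
  shows "R3p n c B' k = R3p n c B k"
proof -
  have "\<forall>s<k. homog n c B' s = homog n c B s \<and> low n B' s = low n B s"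
    using assms col_cong by (metis less_imp_le)
  moreover have "\<forall>m. B' m k = B m k" using assms by simp
  ultimately show ?thesis unfolding R3p_def by metis
qed

lemma inner:
  assumes "conmat_inner n c j i B B'" "Inv n A B" "j \<in> {1..n}"
  shows "Inv n A B' \<and> (\<forall>x k. k \<noteq> j \<longrightarrow> B' x k = B x k) \<and> (\<forall>x. i < x \<longrightarrow> B' x j = B x j) \<and>
    (\<forall>m. 1 \<le> m \<and> m \<le> i \<longrightarrow> B' m j \<longrightarrow> \<not>(\<exists>s<j. homog n c B' s \<and> low n B' s = m))"
  using assms(1,2)
proof (induction rule: conmat_inner.induct)
  case (base B)
  then show ?case by auto
next
  case (add B i s B')
  let ?C = "add_col B s j"
  have sn: "s \<in> {1..n}" using add.hyps(3) by (simp add: homog_def)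
  have IC: "Inv n A ?C" using Inv_add[OF add.prems sn assms(3) add.hyps(2)] .
  note IH = add.IH[OF IC]
  have S: "\<forall>i k. B i k \<longrightarrow> i \<in> {1..n} \<and> k \<in> {1..n} \<and> i < k" using add.prems by (simp add: Inv_def)
  have nz: "nonzero_col n B s" using add.hyps(3) by (simp add: homog_def)
  have cols: "\<forall>x k. k \<noteq> j \<longrightarrow> B' x k = B x k" using IH by (simp add: add_col_def)
  have rows: "\<forall>x. Suc i < x \<longrightarrow> B' x j = B x j"
  proof (intro allI impI)
    fix x assume x: "Suc i < x"
    have "\<not> B x s"
    proof
      assume "B x s"
      then have "x \<in> {1..n}" using S by blast
      then have "x \<le> low n B s" using low_props(3)[OF nz] \<open>B x s\<close> by blast
      then show False using x add.hyps(4) by simp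
    qed
    then show "B' x j = B x j" using IH x by (simp add: add_col_def)
  qed
  have hom: "\<forall>s'<j. homog n c B' s' = homog n c B s' \<and> low n B' s' = low n B s'"
    using cols col_cong by (metis less_irrefl)
  have rowSi: "\<not> B' (Suc i) j"
  proof -
    have "B (Suc i) s" using low_props(2)[OF nz] add.hyps(4) by simp
    then show ?thesis using IH add.hyps(1) by (simp add: add_col_def)
  qed
  have lowr: "\<forall>m. 1 \<le> m \<and> m \<le> Suc i \<longrightarrow> B' m j \<longrightarrow> \<not>(\<exists>s<j. homog n c B' s \<and> low n B' s = m)"
    using IH rowSi by (metis le_Suc_eq)
  show ?case using IH cols rows lowr by blast
next
  case (skip B i B')
  note IH = skip.IH[OF skip.prems]
  have cols: "\<forall>x k. k \<noteq> j \<longrightarrow> B' x k = B x k" using IH by simp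
  have rows: "\<forall>x. Suc i < x \<longrightarrow> B' x j = B x j" using IH by simp
  have hom: "\<forall>s'<j. homog n c B' s' = homog n c B s' \<and> low n B' s' = low n B s'"
    using cols col_cong by (metis less_irrefl)
  have rowSi: "B' (Suc i) j \<longrightarrow> \<not>(\<exists>s<j. homog n c B' s \<and> low n B' s = Suc i)"
    using IH skip.hyps(1) hom by auto
  have lowr: "\<forall>m. 1 \<le> m \<and> m \<le> Suc i \<longrightarrow> B' m j \<longrightarrow> \<not>(\<exists>s<j. homog n c B' s \<and> low n B' s = m)"
    using IH rowSi by (metis le_Suc_eq)
  show ?case using IH cols rows lowr by blast
qed

lemma outer:
  assumes "conmat_outer n c j B B2" "Inv n A B" "1 \<le> j" "\<forall>k\<in>{1..<j}. R3p n c B k"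
  shows "Inv n A B2 \<and> (\<forall>k\<in>{1..n}. R3p n c B2 k)"
  using assms
proof (induction rule: conmat_outer.induct)
  case (finish j B)
  then show ?case by auto
next
  case (step j B B1 B2)
  define st where "st = (if nonzero_col n B j then low n B j else 0)"
  have jn: "j \<in> {1..n}" using step.hyps(1) step.prems(2) by simp
  have inn: "conmat_inner n c j st B B1" using step.hyps(2) st_def by simp
  note R = inner[OF inn step.prems(1) jn]
  have R3j: "R3p n c B1 j"
    unfolding R3p_def
  proof (intro ballI impI)
    fix m assume m: "m \<in> {1..n}" and b: "B1 m j"
    show "\<not>(\<exists>s<j. homog n c B1 s \<and> low n B1 s = m)"
    proof (cases "m \<le> st")
      case True then show ?thesis using R m b by auto
    next
      case False
      then have "B m j" using R b by simp
      then have nz: "nonzero_col n B j" using m by (auto simp: nonzero_col_def)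
      then have "m \<le> low n B j" using low_props(3)[OF nz m] \<open>B m j\<close> by blast
      then show ?thesis using False nz st_def by simp
    qed
  qed
  have R3k: "\<forall>k\<in>{1..<Suc j}. R3p n c B1 k"
  proof
    fix k assume k: "k \<in> {1..<Suc j}"
    show "R3p n c B1 k"
    proof (cases "k = j")
      case True then show ?thesis using R3j by simp
    next
      case False
      then have "k \<in> {1..<j}" using k by auto
      moreover have "\<forall>x k'. k' \<le> k \<longrightarrow> B1 x k' = B x k'" using R False \<open>k \<in> {1..<j}\<close> by auto
      ultimately show ?thesis using R3p_cong step.prems(3) by blast
    qed
  qed
  show ?case using step.IH R R3k by simp
qed


lemma R2_core:
  fixes R A :: mat and c :: "nat \<Rightarrow> 'p"
  assumes I: "Inv n A R" and R3: "\<forall>k\<in>{1..n}. R3p n c R k"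
    and DD: "\<forall>m k. (\<Sum>i\<in>{1..n}. bv A m i * bv A i k) = 0"
    and conv: "\<forall>i k j. i\<in>{1..n} \<longrightarrow> k\<in>{1..n} \<longrightarrow> j \<in> {1..n} \<longrightarrow> i \<le> k \<longrightarrow> k \<le> j \<longrightarrow> c i = c j \<longrightarrow> c k = c i"
    and inj: "inj_on (low n R) (Jh n c R)"
    and hs: "homog n c R s" and hj: "homog n c R j" and js: "low n R s = j"
  shows False
proof -
  have S: "\<And>i k. R i k \<Longrightarrow> i \<in> {1..n} \<and> k \<in> {1..n} \<and> i < k" using I by (simp add: Inv_def)
  have nzs: "nonzero_col n R s" and nzj: "nonzero_col n R j" using hs hj by (auto simp: homog_def)
  define p where "p = c j"
  define l where "l = low n R j"
  have jn: "j \<in> {1..n}" using hj by (simp add: homog_def)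
  have sn: "s \<in> {1..n}" using hs by (simp add: homog_def)
  have Rjs: "R j s" using low_props(2)[OF nzs] js by simp
  have ln: "l \<in> {1..n}" and Rlj: "R l j" using low_props[OF nzj] l_def by auto
  have cl: "c l = p" using hj l_def p_def by (simp add: homog_def)
  have lj: "l < j" using S[OF Rlj] by simp
  obtain Us where Us: "Us \<subseteq> {1..s}" "\<forall>i. bv R i s = (\<Sum>u\<in>Us. bv A i u)"
    using I sn unfolding Inv_def by blast
  have fUs: "finite Us" using Us(1) finite_subset by auto
  have stepA: "(\<Sum>i\<in>{1..n}. bv A m i * bv R i s) = 0" for m
  proof -
    have "(\<Sum>i\<in>{1..n}. bv A m i * bv R i s) = (\<Sum>i\<in>{1..n}. \<Sum>u\<in>Us. bv A m i * bv A i u)"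
      using Us(2) by (simp add: sum_distrib_left)
    also have "\<dots> = (\<Sum>u\<in>Us. \<Sum>i\<in>{1..n}. bv A m i * bv A i u)"
      by (rule sum.swap)
    also have "\<dots> = 0" using DD by simp
    finally show ?thesis .
  qed
  have stepB: "bv A m j = (\<Sum>i\<in>{1..<j}. bv A m i * bv R i s)" for m
  proof -
    have "(\<Sum>i\<in>{1..n}. bv A m i * bv R i s) = (\<Sum>i\<in>{1..j}. bv A m i * bv R i s)"
    proof (rule sum.mono_neutral_right)
      show "finite {1..n}" by simp
      show "{1..j} \<subseteq> {1..n}" using jn by auto
      show "\<forall>i\<in>{1..n} - {1..j}. bv A m i * bv R i s = 0"
      proof
        fix i assume i: "i \<in> {1..n} - {1..j}"
        have "\<not> R i s"
        proof
          assume "R i s"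
          then have "i \<le> low n R s" using low_props(3)[OF nzs] i by blast
          then show False using i js by auto
        qed
        then show "bv A m i * bv R i s = 0" by simp
      qed
    qed
    also have "{1..j} = insert j {1..<j}" using jn by auto
    also have "(\<Sum>i\<in>insert j {1..<j}. bv A m i * bv R i s) = bv A m j * bv R j s + (\<Sum>i\<in>{1..<j}. bv A m i * bv R i s)"
      by (rule sum.insert) auto
    finally have "bv A m j * bv R j s + (\<Sum>i\<in>{1..<j}. bv A m i * bv R i s) = 0" using stepA by simp
    then show ?thesis using Rjs bit_eq_of_sum0 by simp
  qed
  obtain Uj where Uj: "Uj \<subseteq> {1..j}" "j \<in> Uj" "\<forall>i. bv R i j = (\<Sum>u\<in>Uj. bv A i u)"
    using I jn unfolding Inv_def by blast
  have fUj: "finite Uj" using Uj(1) finite_subset by auto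
  define coef where "coef k = bv R k s + of_bool (k \<in> Uj)" for k
  have stepC: "bv R m j = (\<Sum>k\<in>{1..<j}. coef k * bv A m k)" for m
  proof -
    have "bv R m j = bv A m j + (\<Sum>u\<in>Uj-{j}. bv A m u)"
      using Uj(3) sum.remove[OF fUj Uj(2)] by metis
    also have "(\<Sum>u\<in>Uj-{j}. bv A m u) = (\<Sum>k\<in>{1..<j}. of_bool (k \<in> Uj) * bv A m k)"
      by (rule sum.mono_neutral_cong_left) (use Uj(1) in auto)
    also have "bv A m j + (\<Sum>k\<in>{1..<j}. of_bool (k \<in> Uj) * bv A m k) = (\<Sum>k\<in>{1..<j}. coef k * bv A m k)"
      unfolding stepB coef_def distrib_right sum.distrib by (simp only: mult.commute)
    finally show ?thesis .
  qed
  have "\<forall>k\<in>{1..n}. \<exists>W. W \<subseteq> {1..k} \<and> k \<in> W \<and> (\<forall>i. bv A i k = (\<Sum>t\<in>W. bv R i t))"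
    using I unfolding Inv_def by blast
  then obtain Wf where Wf: "\<And>k. k \<in> {1..n} \<Longrightarrow> Wf k \<subseteq> {1..k} \<and> (\<forall>i. bv A i k = (\<Sum>t\<in>Wf k. bv R i t))"
    by metis
  define d where "d t = (\<Sum>k\<in>{1..<j}. coef k * of_bool (t \<in> Wf k))" for t
  have stepD: "bv R m j = (\<Sum>t\<in>{1..<j}. d t * bv R m t)" for m
  proof -
    have e: "bv A m k = (\<Sum>t\<in>{1..<j}. of_bool (t \<in> Wf k) * bv R m t)" if k: "k \<in> {1..<j}" for k
    proof -
      have kn: "k \<in> {1..n}" using k jn by auto
      have "bv A m k = (\<Sum>t\<in>Wf k. bv R m t)" using Wf[OF kn] by blast
      also have "\<dots> = (\<Sum>t\<in>{1..<j}. of_bool (t \<in> Wf k) * bv R m t)"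
        by (rule sum.mono_neutral_cong_left) (use Wf[OF kn] k in auto)
      finally show ?thesis .
    qed
    have "bv R m j = (\<Sum>k\<in>{1..<j}. coef k * (\<Sum>t\<in>{1..<j}. of_bool (t \<in> Wf k) * bv R m t))"
      unfolding stepC using e by (intro sum.cong) auto
    also have "\<dots> = (\<Sum>k\<in>{1..<j}. \<Sum>t\<in>{1..<j}. coef k * of_bool (t \<in> Wf k) * bv R m t)"
      by (simp only: sum_distrib_left mult.assoc)
    also have "\<dots> = (\<Sum>t\<in>{1..<j}. \<Sum>k\<in>{1..<j}. coef k * of_bool (t \<in> Wf k) * bv R m t)"
      by (rule sum.swap)
    also have "\<dots> = (\<Sum>t\<in>{1..<j}. d t * bv R m t)"
      unfolding d_def by (simp only: sum_distrib_right)
    finally show ?thesis .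
  qed
  define G where "G = {t\<in>{1..<j}. d t = 1 \<and> homog n c R t \<and> c t = p}"
  have fG: "finite G" unfolding G_def by simp
  have stepE: "bv R m j = (\<Sum>t\<in>G. bv R m t)" if m: "m \<in> {1..n}" "c m = p" for m
  proof -
    have "(\<Sum>t\<in>{1..<j}. d t * bv R m t) = (\<Sum>t\<in>G. bv R m t)"
    proof (rule sum.mono_neutral_cong_right)
      show "finite {1..<j}" by simp
      show "G \<subseteq> {1..<j}" unfolding G_def by auto
      show "\<forall>t\<in>{1..<j} - G. d t * bv R m t = 0"
      proof
        fix t assume t: "t \<in> {1..<j} - G"
        show "d t * bv R m t = 0"
        proof (cases "d t = 0")
          case True then show ?thesis by simp
        next
          case False
          then have d1: "d t = 1" using bit_cases2 by blast
          have "\<not> R m t"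
          proof
            assume Rmt: "R m t"
            have mt: "m < t" and tn: "t \<in> {1..n}" using S[OF Rmt] by auto
            have ct: "c t = p" using conv m tn jn mt t p_def by (metis DiffD1 atLeastLessThan_iff less_imp_le)
            have nzt: "nonzero_col n R t" using m Rmt by (auto simp: nonzero_col_def)
            have lt1: "m \<le> low n R t" using low_props(3)[OF nzt m(1) Rmt] .
            have lt2: "low n R t < t" using S[OF low_props(2)[OF nzt]] by simp
            have ltn: "low n R t \<in> {1..n}" using low_props(1)[OF nzt] .
            have "c (low n R t) = c m" using conv m(1) ltn tn lt1 lt2 ct m(2)
              by (metis less_imp_le)
            then have "homog n c R t" using tn nzt ct m(2) by (simp add: homog_def)
            then have "t \<in> G" using t d1 ct unfolding G_def by auto
            then show False using t by auto
          qed
          then show ?thesis by simp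
        qed
      qed
      show "\<And>t. t \<in> G \<Longrightarrow> d t * bv R m t = bv R m t" unfolding G_def by auto
    qed
    then show ?thesis using stepD by simp
  qed
  have sl: "(\<Sum>t\<in>G. bv R l t) = 1" using stepE[OF ln cl] Rlj by simp
  have "\<exists>t\<in>G. R l t"
  proof (rule ccontr)
    assume "\<not> (\<exists>t\<in>G. R l t)"
    then have "(\<Sum>t\<in>G. bv R l t) = 0" by simp
    then show False using sl by simp
  qed
  then obtain t1 where t1: "t1 \<in> G" "R l t1" by blast
  have Gne: "G \<noteq> {}" using t1 by auto
  define L where "L = Max (low n R ` G)"
  have "L \<in> low n R ` G" unfolding L_def using fG Gne by simp
  then obtain t0 where t0: "t0 \<in> G" "low n R t0 = L" by auto
  have LGe: "\<And>t. t \<in> G \<Longrightarrow> low n R t \<le> L" unfolding L_def using fG by simp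
  have hom0: "homog n c R t0" using t0 G_def by simp
  have nz0: "nonzero_col n R t0" using hom0 by (simp add: homog_def)
  have Ln: "L \<in> {1..n}" using low_props(1)[OF nz0] t0 by simp
  have cL: "c L = p" using hom0 t0 unfolding G_def homog_def by auto
  have sL: "(\<Sum>t\<in>G. bv R L t) = 1"
  proof -
    have "(\<Sum>t\<in>G. bv R L t) = bv R L t0 + (\<Sum>t\<in>G-{t0}. bv R L t)"
      using sum.remove[OF fG t0(1)] by metis
    also have "(\<Sum>t\<in>G-{t0}. bv R L t) = 0"
    proof (rule sum.neutral, rule ballI)
      fix t assume t: "t \<in> G - {t0}"
      have "\<not> R L t"
      proof
        assume RLt: "R L t"
        have nzt: "nonzero_col n R t" using Ln RLt by (auto simp: nonzero_col_def)
        have "L \<le> low n R t" using low_props(3)[OF nzt Ln RLt] .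
        then have "low n R t = low n R t0" using LGe t t0 by force
        moreover have "t \<in> Jh n c R" "t0 \<in> Jh n c R" using t t0(1) unfolding G_def Jh_def by auto
        ultimately have "t = t0" using inj by (simp add: inj_on_def)
        then show False using t by simp
      qed
      then show "bv R L t = 0" by simp
    qed
    finally have "(\<Sum>t\<in>G. bv R L t) = bv R L t0 + 0" .
    moreover have "R L t0" using low_props(2)[OF nz0] t0 by simp
    ultimately show ?thesis by simp
  qed
  have RLj: "R L j" using stepE[OF Ln cL] sL by (cases "R L j") simp_all
  have "L \<le> l" using low_props(3)[OF nzj Ln RLj] l_def by simp
  moreover have "l \<le> L"
  proof -
    have nzt: "nonzero_col n R t1" using ln t1(2) by (auto simp: nonzero_col_def)
    have "l \<le> low n R t1" using low_props(3)[OF nzt ln t1(2)] .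
    then show ?thesis using LGe[OF t1(1)] by simp
  qed
  ultimately have Ll: "L = l" by simp
  have "t0 < j" using t0 G_def by simp
  then show False using R3 jn ln Rlj hom0 t0(2) Ll unfolding R3p_def by blast
qed


lemma two_between:
  assumes fY: "finite Y" and XY: "X \<subseteq> Y" and c: "card Y = card X + 2"
  shows "card {Z. X \<subseteq> Z \<and> Z \<subseteq> Y \<and> card Z = card X + 1} = 2"
proof -
  have fX: "finite X" using fY XY finite_subset by blast
  have "card (Y - X) = 2" using card_Diff_subset[OF fX XY] c by simp
  then obtain a b where ab: "Y - X = {a, b}" "a \<noteq> b" by (meson card_2_iff)
  have eq: "{Z. X \<subseteq> Z \<and> Z \<subseteq> Y \<and> card Z = card X + 1} = {insert a X, insert b X}"
  proof (intro equalityI subsetI)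
    fix Z assume "Z \<in> {Z. X \<subseteq> Z \<and> Z \<subseteq> Y \<and> card Z = card X + 1}"
    then have Z: "X \<subseteq> Z" "Z \<subseteq> Y" "card Z = card X + 1" by auto
    have fZ: "finite Z" using fY Z(2) finite_subset by blast
    have "card (Z - X) = 1" using card_Diff_subset[OF fX Z(1)] Z(3) by simp
    then obtain x where x: "Z - X = {x}" by (meson card_1_singletonE)
    have "x \<in> {a, b}" using x Z(2) ab(1) by blast
    moreover have "Z = insert x X" using x Z(1) by blast
    ultimately show "Z \<in> {insert a X, insert b X}" by auto
  next
    fix Z assume "Z \<in> {insert a X, insert b X}"
    moreover have "a \<notin> X" "b \<notin> X" "a \<in> Y" "b \<in> Y" using ab(1) by auto
    ultimately show "Z \<in> {Z. X \<subseteq> Z \<and> Z \<subseteq> Y \<and> card Z = card X + 1}"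
      using fX XY by auto
  qed
  have "insert a X \<noteq> insert b X" using ab by auto
  then show ?thesis unfolding eq by simp
qed

lemma DD_lemma:
  assumes K: "simplicial_complex K" and bij: "bij_betw \<sigma> {1..card K} K"
  shows "(\<Sum>i\<in>{1..card K}. bv (boundary_matrix (card K) \<sigma>) m i * bv (boundary_matrix (card K) \<sigma>) i k) = (0::bit)"
proof -
  let ?n = "card K"
  let ?A = "boundary_matrix ?n \<sigma>"
  define S where "S = {i\<in>{1..?n}. ?A m i \<and> ?A i k}"
  have "(\<Sum>i\<in>{1..?n}. bv ?A m i * bv ?A i k) = (\<Sum>i\<in>{1..?n}. (of_bool (?A m i \<and> ?A i k) :: bit))"
    by (intro sum.cong) auto
  also have "\<dots> = of_nat (card S)" unfolding S_def by (simp add: Int_def sum_of_bool_eq)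
  also have "card S = 0 \<or> card S = 2"
  proof (cases "S = {}")
    case True then show ?thesis by simp
  next
    case False
    then obtain i0 where i0: "i0 \<in> S" by auto
    have mk: "m \<in> {1..?n}" "k \<in> {1..?n}" using i0 unfolding S_def boundary_matrix_def by auto
    have sub: "\<sigma> m \<subseteq> \<sigma> k" and cc: "card (\<sigma> k) = card (\<sigma> m) + 2"
      using i0 unfolding S_def boundary_matrix_def by auto
    have skK: "\<sigma> k \<in> K" using bij mk by (auto simp: bij_betw_def)
    have fk: "finite (\<sigma> k)" using K skK by (simp add: simplicial_complex_def)
    define T where "T = {Z. \<sigma> m \<subseteq> Z \<and> Z \<subseteq> \<sigma> k \<and> card Z = card (\<sigma> m) + 1}"
    have cT: "card T = 2" unfolding T_def using two_between[OF fk sub cc] .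
    have "bij_betw \<sigma> S T"
    proof (rule bij_betw_imageI)
      show "inj_on \<sigma> S" using bij unfolding bij_betw_def S_def by (auto intro: inj_on_subset)
      show "\<sigma> ` S = T"
      proof (intro equalityI subsetI)
        fix Z assume "Z \<in> \<sigma> ` S"
        then show "Z \<in> T" unfolding S_def T_def boundary_matrix_def by auto
      next
        fix Z assume Z: "Z \<in> T"
        have "Z \<noteq> {}"
        proof
          assume "Z = {}"
          then show False using Z unfolding T_def by simp
        qed
        then have "Z \<in> K" using K skK Z unfolding simplicial_complex_def T_def by blast
        then obtain i where i: "i \<in> {1..?n}" "\<sigma> i = Z" using bij by (metis bij_betw_def imageE)
        have "i \<in> S" using i Z mk cc unfolding S_def T_def boundary_matrix_def by auto
        then show "Z \<in> \<sigma> ` S" using i by auto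
      qed
    qed
    then have "card S = card T" by (rule bij_betw_same_card)
    then show ?thesis using cT by simp
  qed
  ultimately show ?thesis by auto
qed

lemma enum_facts:
  assumes "admissible_enumeration K P idx \<sigma>"
  shows "\<forall>i k j. i\<in>{1..card K} \<longrightarrow> k\<in>{1..card K} \<longrightarrow> j \<in> {1..card K} \<longrightarrow> i \<le> k \<longrightarrow> k \<le> j \<longrightarrow>
           (idx \<circ> \<sigma>) i = (idx \<circ> \<sigma>) j \<longrightarrow> (idx \<circ> \<sigma>) k = (idx \<circ> \<sigma>) i"
proof -
  obtain r where r: "linear_order_on P r"
    "\<forall>i\<in>{1..card K}. \<forall>j\<in>{1..card K}. i \<le> j \<longrightarrow> (idx (\<sigma> i), idx (\<sigma> j)) \<in> r"
    using assms unfolding admissible_enumeration_def by blast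
  have as: "antisym r" using r(1) by (simp add: linear_order_on_def partial_order_on_def)
  show ?thesis
  proof (intro allI impI)
    fix i k j assume h: "i \<in> {1..card K}" "k \<in> {1..card K}" "j \<in> {1..card K}" "i \<le> k" "k \<le> j"
      "(idx \<circ> \<sigma>) i = (idx \<circ> \<sigma>) j"
    have a: "(idx (\<sigma> i), idx (\<sigma> k)) \<in> r" using r(2) h(1,2,4) by blast
    have b: "(idx (\<sigma> k), idx (\<sigma> j)) \<in> r" using r(2) h(2,3,5) by blast
    have b': "(idx (\<sigma> k), idx (\<sigma> i)) \<in> r" using b h(6) by simp
    show "(idx \<circ> \<sigma>) k = (idx \<circ> \<sigma>) i" using as a b' unfolding antisym_def by auto
  qed
qed

lemma Inv_init:
  assumes "admissible_enumeration K P idx \<sigma>"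
  shows "Inv (card K) (boundary_matrix (card K) \<sigma>) (boundary_matrix (card K) \<sigma>)"
proof -
  let ?n = "card K"
  let ?A = "boundary_matrix ?n \<sigma>"
  have ord: "\<forall>i\<in>{1..?n}. \<forall>j\<in>{1..?n}. \<sigma> i \<subset> \<sigma> j \<longrightarrow> i < j"
    using assms unfolding admissible_enumeration_def by blast
  have S: "\<forall>i k. ?A i k \<longrightarrow> i \<in> {1..?n} \<and> k \<in> {1..?n} \<and> i < k"
  proof (intro allI impI)
    fix i k assume a: "?A i k"
    then have "i \<in> {1..?n}" "k \<in> {1..?n}" "\<sigma> i \<subseteq> \<sigma> k" "card (\<sigma> i) + 1 = card (\<sigma> k)"
      unfolding boundary_matrix_def by auto
    moreover then have "\<sigma> i \<subset> \<sigma> k" by auto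
    ultimately show "i \<in> {1..?n} \<and> k \<in> {1..?n} \<and> i < k" using ord by blast
  qed
  have U: "\<forall>k\<in>{1..?n}. \<exists>U. U \<subseteq> {1..k} \<and> k \<in> U \<and> (\<forall>i. bv ?A i k = (\<Sum>u\<in>U. bv ?A i u))"
    by (intro ballI exI[of _ "{k}" for k]) auto
  show ?thesis unfolding Inv_def using S U by blast
qed


theorem proposition4:
  fixes K :: "'v set set" and V :: "'v set set set" and P :: "'p::order set"
    and idx :: "'v set \<Rightarrow> 'p" and \<sigma> :: "nat \<Rightarrow> 'v set" and Aout :: mat
  assumes "simplicial_complex K"
    and "multivector_field K V"
    and "morse_decomposition K V P idx"
    and "admissible_enumeration K P idx \<sigma>"
    and "conmat_reduction (card K) (idx \<circ> \<sigma>) (boundary_matrix (card K) \<sigma>) Aout"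
  shows "bij_betw (low (card K) Aout) (Jh (card K) (idx \<circ> \<sigma>) Aout) (Jt (card K) (idx \<circ> \<sigma>) Aout) \<and>
    Jh (card K) (idx \<circ> \<sigma>) Aout \<inter> Jt (card K) (idx \<circ> \<sigma>) Aout = {} \<and>
    (\<forall>j\<in>{1..card K}. \<forall>i\<in>{1..card K}. Aout i j \<and> i \<le> low (card K) Aout j \<longrightarrow>
           \<not> (\<exists>s\<in>Jh (card K) (idx \<circ> \<sigma>) Aout. s < j \<and> low (card K) Aout s = i))"
proof -
  let ?n = "card K"
  let ?c = "idx \<circ> \<sigma>"
  let ?A = "boundary_matrix ?n \<sigma>"
  have O: "Inv ?n ?A Aout \<and> (\<forall>k\<in>{1..?n}. R3p ?n ?c Aout k)"
    using outer[of ?n ?c 1 ?A Aout ?A] assms(5) Inv_init[OF assms(4)]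
    unfolding conmat_reduction_def by simp
  have bij: "bij_betw \<sigma> {1..card K} K" using assms(4) by (simp add: admissible_enumeration_def)
  have R3: "\<forall>j\<in>{1..?n}. \<forall>i\<in>{1..?n}. Aout i j \<and> i \<le> low ?n Aout j \<longrightarrow>
           \<not> (\<exists>s\<in>Jh ?n ?c Aout. s < j \<and> low ?n Aout s = i)"
    using O unfolding R3p_def Jh_def by blast
  have inj: "inj_on (low ?n Aout) (Jh ?n ?c Aout)"
  proof (rule inj_onI)
    have key: "False" if a: "s \<in> Jh ?n ?c Aout" "t \<in> Jh ?n ?c Aout" "low ?n Aout s = low ?n Aout t" "s < t" for s t
    proof -
      have ht: "homog ?n ?c Aout t" "homog ?n ?c Aout s" using a by (auto simp: Jh_def)
      then have nz: "nonzero_col ?n Aout t" and tn: "t \<in> {1..?n}" by (auto simp: homog_def)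
      have "low ?n Aout t \<in> {1..?n}" "Aout (low ?n Aout t) t" using low_props[OF nz] by auto
      then show False using O tn ht(2) a(3,4) unfolding R3p_def by metis
    qed
    fix s t assume "s \<in> Jh ?n ?c Aout" "t \<in> Jh ?n ?c Aout" "low ?n Aout s = low ?n Aout t"
    then show "s = t" using key by (metis linorder_neqE_nat)
  qed
  have B: "bij_betw (low ?n Aout) (Jh ?n ?c Aout) (Jt ?n ?c Aout)"
    using inj unfolding Jt_def by (simp add: bij_betw_def)
  have DD: "\<forall>m k. (\<Sum>i\<in>{1..?n}. bv ?A m i * bv ?A i k) = 0"
    using DD_lemma[OF assms(1) bij] by blast
  have D: "Jh ?n ?c Aout \<inter> Jt ?n ?c Aout = {}"
  proof (rule ccontr)
    assume "Jh ?n ?c Aout \<inter> Jt ?n ?c Aout \<noteq> {}"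
    then obtain j s where j: "j \<in> Jh ?n ?c Aout" and s: "s \<in> Jh ?n ?c Aout" and js: "low ?n Aout s = j"
      unfolding Jt_def by auto
    show False
      using R2_core[OF conjunct1[OF O] conjunct2[OF O] DD enum_facts[OF assms(4)] inj, of s j] j s js
      by (simp add: Jh_def)
  qed
  show ?thesis using B D R3 by blast
qed

end
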